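(* Let $D\subseteq\mathbb{R}^n$ be nonempty, convex, closed and bounded, and let $f:\mathbb{R}^n\to\mathbb{R}$ be continuously differentiable. Consider Method (CGMIS) (described in the context). Then: (i) the number of changes of the index $k$ at each stage $p$ is finite, so the sequence $\{w^p\}_{p\ge0}$ is infinite; (ii) the sequence $\{w^p\}$ has limit points, and all of them belong to $D^0$; (iii) if, in addition, $f$ is pseudo-convex on $D$, then all limit points of $\{w^p\}$ belong to $D^*$, and $\lim_{p\to\infty}f(w^p)=f^*$.
   Context: Notation: $f'(x)$ is the gradient of $f$. The problem is $\min_{x\in D}f(x)$; $f^*=\inf_{x\in D}f(x)$ and $D^*$ is its solution set. $D^0$ is the set of $x^*\in D$ with $\langle f'(x^* ),x-x^*\rangle\ge0$ for all $x\in D$. $\mu(x)=\max_{y\in D}\langle f'(x),x-y\rangle$. A differentiable $\varphi$ is pseudo-convex on $D$ if for all $x,y\in D$, $\langle\varphi'(x),y-x\rangle\ge0$ implies $\varphi(y)\ge\varphi(x)$. Method (CGMIS): Choose $w^0\in D$, $\beta\in(0,1)$, and a positive sequence $\{\delta_p\}$ with $\delta_p\to0$. Set $p=1$. (Step 0) Choose a sequence of numbers $\tau_{l,p}\in(0,1)$, $l=0,1,\dots$, with $\tau_{l,p}\to0$ as $l\to\infty$; set $k=0$, $l=0$, $x^0=w^{p-1}$, and choose $\lambda_0\in(0,\tau_{0,p}]$. (Step 1) If $\mu(x^k)<\delta_p$, set $w^p=x^k$, replace $p$ by $p+1$ and go to Step 0 (restart). Otherwise choose any $z^k\in D$ with $\langle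 f'(x^k),x^k-z^k\rangle\ge\delta_p$. (Step 2) Set $d^k=z^k-x^k$, $x^{k+1}=x^k+\lambda_k d^k$. If $f(x^{k+1})\le f(x^k)+\beta\lambda_k\langle f'(x^k),d^k\rangle$, choose any $\lambda_{k+1}\in[\lambda_k,\tau_{l,p}]$ (with $l$ unchanged). Otherwise set $\lambda'_{k+1}=\min\{\lambda_k,\tau_{l+1,p}\}$, replace $l$ by $l+1$, and choose any $\lambda_{k+1}\in(0,\lambda'_{k+1}]$. Set $k=k+1$ and go to Step 1. The iterations with a fixed value of $p$ form stage $p$. *)

theory Defs
  imports "HOL-Analysis.Analysis"
begin

definition mu :: "'a::euclidean_space set \<Rightarrow> ('a \<Rightarrow> 'a) \<Rightarrow> 'a \<Rightarrow> real" where
  "mu D f' x = (SUP y\<in>D. f' x \<bullet> (x - y))"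

definition D0 :: "'a::euclidean_space set \<Rightarrow> ('a \<Rightarrow> 'a) \<Rightarrow> 'a set" where
  "D0 D f' = {xs \<in> D. \<forall>x\<in>D. f' xs \<bullet> (x - xs) \<ge> 0}"

definition fstar :: "'a set \<Rightarrow> ('a \<Rightarrow> real) \<Rightarrow> real" where
  "fstar D f = (INF x\<in>D. f x)"

definition Dstar :: "'a set \<Rightarrow> ('a \<Rightarrow> real) \<Rightarrow> 'a set" where
  "Dstar D f = {x \<in> D. f x = fstar D f}"

definition pseudo_convex_on :: "'a::euclidean_space set \<Rightarrow> ('a \<Rightarrow> real) \<Rightarrow> ('a \<Rightarrow> 'a) \<Rightarrow> bool" where
  "pseudo_convex_on D \<phi> \<phi>' \<longleftrightarrow> (\<forall>x\<in>D. \<forall>y\<in>D. \<phi>' x \<bullet> (y - x) \<ge> 0 \<longrightarrow> \<phi> y \<ge> \<phi> x)"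

definition limit_point_seq :: "(nat \<Rightarrow> 'a::topological_space) \<Rightarrow> 'a \<Rightarrow> bool" where
  "limit_point_seq w a \<longleftrightarrow> (\<exists>r. strict_mono r \<and> (w \<circ> r) \<longlonglongrightarrow> a)"

definition admissible_tau :: "(nat \<Rightarrow> real) \<Rightarrow> bool" where
  "admissible_tau \<tau> \<longleftrightarrow> (\<forall>l. 0 < \<tau> l \<and> \<tau> l < 1) \<and> \<tau> \<longlonglongrightarrow> 0"

definition stage_init :: "(nat \<Rightarrow> real) \<Rightarrow> (nat \<Rightarrow> 'a) \<Rightarrow> (nat \<Rightarrow> real) \<Rightarrow> (nat \<Rightarrow> nat) \<Rightarrow> 'a \<Rightarrow> bool" where
  "stage_init \<tau> x lam l x0 \<longleftrightarrow> x 0 = x0 \<and> l 0 = 0 \<and> 0 < lam 0 \<and> lam 0 \<le> \<tau> 0"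

text \<open>One non-terminating pass through Steps 1 and 2 at iteration k of a stage with threshold delta:
  the stopping test fails, z k is an admissible direction point, and x, lambda, l are updated.\<close>
definition cgmis_step ::
  "'a::euclidean_space set \<Rightarrow> ('a \<Rightarrow> real) \<Rightarrow> ('a \<Rightarrow> 'a) \<Rightarrow> real \<Rightarrow> real \<Rightarrow> (nat \<Rightarrow> real)
   \<Rightarrow> (nat \<Rightarrow> 'a) \<Rightarrow> (nat \<Rightarrow> 'a) \<Rightarrow> (nat \<Rightarrow> real) \<Rightarrow> (nat \<Rightarrow> nat) \<Rightarrow> nat \<Rightarrow> bool" where
  "cgmis_step D f f' \<beta> \<delta> \<tau> x z lam l k \<longleftrightarrow>
     \<delta> \<le> mu D f' (x k) \<and> z k \<in> D \<and> \<delta> \<le> f' (x k) \<bullet> (x k - z k) \<and>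
     x (Suc k) = x k + lam k *\<^sub>R (z k - x k) \<and>
     (if f (x (Suc k)) \<le> f (x k) + \<beta> * lam k * (f' (x k) \<bullet> (z k - x k))
      then l (Suc k) = l k \<and> lam k \<le> lam (Suc k) \<and> lam (Suc k) \<le> \<tau> (l k)
      else l (Suc k) = Suc (l k) \<and> 0 < lam (Suc k) \<and> lam (Suc k) \<le> min (lam k) (\<tau> (Suc (l k))))"

definition stage_output ::
  "'a::euclidean_space set \<Rightarrow> ('a \<Rightarrow> real) \<Rightarrow> ('a \<Rightarrow> 'a) \<Rightarrow> real \<Rightarrow> real \<Rightarrow> 'a \<Rightarrow> 'a \<Rightarrow> bool" where
  "stage_output D f f' \<beta> \<delta> w0 w1 \<longleftrightarrow>
     (\<exists>\<tau> x z lam l K. admissible_tau \<tau> \<and> stage_init \<tau> x lam l w0 \<and>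
        (\<forall>k<K. cgmis_step D f f' \<beta> \<delta> \<tau> x z lam l k) \<and>
        mu D f' (x K) < \<delta> \<and> w1 = x K)"

definition stage_infinite ::
  "'a::euclidean_space set \<Rightarrow> ('a \<Rightarrow> real) \<Rightarrow> ('a \<Rightarrow> 'a) \<Rightarrow> real \<Rightarrow> real \<Rightarrow> 'a \<Rightarrow> bool" where
  "stage_infinite D f f' \<beta> \<delta> x0 \<longleftrightarrow>
     (\<exists>\<tau> x z lam l. admissible_tau \<tau> \<and> stage_init \<tau> x lam l x0 \<and>
        (\<forall>k. cgmis_step D f f' \<beta> \<delta> \<tau> x z lam l k))"

text \<open>A full run of CGMIS: w 0 = w^0 and w (Suc p) = w^{p+1} is an output of stage p+1
  (threshold delta (p+1)) started at w p.\<close>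
definition cgmis_run ::
  "'a::euclidean_space set \<Rightarrow> ('a \<Rightarrow> real) \<Rightarrow> ('a \<Rightarrow> 'a) \<Rightarrow> real \<Rightarrow> (nat \<Rightarrow> real) \<Rightarrow> 'a \<Rightarrow> (nat \<Rightarrow> 'a) \<Rightarrow> bool" where
  "cgmis_run D f f' \<beta> \<delta> w0 w \<longleftrightarrow>
     w 0 = w0 \<and> (\<forall>p. stage_output D f f' \<beta> (\<delta> (Suc p)) (w p) (w (Suc p)))"

end

theory Submission imports Defs begin

lemma mu_max:
  assumes "compact D" "D \<noteq> {}"
  shows "\<exists>s\<in>D. (\<forall>y\<in>D. f' x \<bullet> (x - y) \<le> f' x \<bullet> (x - s)) \<and> mu D f' x = f' x \<bullet> (x - s)"
proof -
  have "continuous_on D (\<lambda>y. f' x \<bullet> (x - y))" by (intro continuous_intros)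
  from continuous_attains_sup[OF assms this] obtain s where s: "s\<in>D" "\<forall>y\<in>D. f' x \<bullet> (x - y) \<le> f' x \<bullet> (x - s)" by blast
  have bd: "bdd_above ((\<lambda>y. f' x \<bullet> (x - y)) ` D)" using s by (auto intro!: bdd_aboveI2)
  have "mu D f' x = f' x \<bullet> (x - s)" unfolding mu_def
  proof (rule antisym)
    show "(SUP y\<in>D. f' x \<bullet> (x - y)) \<le> f' x \<bullet> (x - s)" using assms(2) s by (auto intro!: cSUP_least)
    show "f' x \<bullet> (x - s) \<le> (SUP y\<in>D. f' x \<bullet> (x - y))" using bd s(1) by (rule cSUP_upper2) simp
  qed
  then show ?thesis using s by blast
qed

lemma mu_ge:
  assumes "compact D" "D \<noteq> {}" "y \<in> D"
  shows "f' x \<bullet> (x - y) \<le> mu D f' x"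
  using mu_max[OF assms(1,2), of f' x] assms(3) by auto

lemma stage_inv:
  assumes "admissible_tau \<tau>" "stage_init \<tau> x lam l x0" "\<forall>j<k. cgmis_step D f f' \<beta> \<delta> \<tau> x z lam l j"
  shows "0 < lam k \<and> lam k \<le> \<tau> (l k)"
  using assms(3)
proof (induction k)
  case 0 then show ?case using assms(1,2) unfolding stage_init_def admissible_tau_def by auto
next
  case (Suc k)
  have "\<forall>j<k. cgmis_step D f f' \<beta> \<delta> \<tau> x z lam l j" using Suc.prems by auto
  then have ih: "0 < lam k" "lam k \<le> \<tau> (l k)" using Suc.IH by auto
  have st: "cgmis_step D f f' \<beta> \<delta> \<tau> x z lam l k" using Suc.prems by auto
  show ?case using st ih unfolding cgmis_step_def by (auto split: if_splits)
qed

lemma stage_inD: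
  assumes "convex D" "x0 \<in> D" "admissible_tau \<tau>" "stage_init \<tau> x lam l x0" "\<forall>j<k. cgmis_step D f f' \<beta> \<delta> \<tau> x z lam l j"
  shows "x k \<in> D"
  using assms(5)
proof (induction k)
  case 0 then show ?case using assms(2,4) unfolding stage_init_def by auto
next
  case (Suc k)
  have "\<forall>j<k. cgmis_step D f f' \<beta> \<delta> \<tau> x z lam l j" using Suc.prems by auto
  then have ih: "x k \<in> D" using Suc.IH by auto
  have st: "cgmis_step D f f' \<beta> \<delta> \<tau> x z lam l k" using Suc.prems by auto
  have lk: "0 < lam k" "lam k \<le> \<tau> (l k)" using stage_inv[OF assms(3,4), of k D f f' \<beta> \<delta> z] Suc.prems by auto
  have "\<tau> (l k) < 1" using assms(3) unfolding admissible_tau_def by auto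
  then have lk1: "lam k \<le> 1" using lk by auto
  have zk: "z k \<in> D" and xs: "x (Suc k) = x k + lam k *\<^sub>R (z k - x k)" using st unfolding cgmis_step_def by auto
  have "x (Suc k) = (1 - lam k) *\<^sub>R x k + lam k *\<^sub>R z k" using xs by (simp add: algebra_simps)
  then show ?case using convexD[OF assms(1) ih zk, of "1 - lam k" "lam k"] lk lk1 by auto
qed

lemma deriv_line:
  assumes "\<And>x. (f has_derivative (\<lambda>h. f' x \<bullet> h)) (at x)"
  shows "((\<lambda>t. f (a + t *\<^sub>R d)) has_real_derivative (f' (a + t *\<^sub>R d) \<bullet> d)) (at t)"
proof -
  have 1: "((\<lambda>t. a + t *\<^sub>R d) has_derivative (\<lambda>h. h *\<^sub>R d)) (at t)"
    by (auto intro!: derivative_eq_intros)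
  have "((\<lambda>t. f (a + t *\<^sub>R d)) has_derivative (\<lambda>h. f' (a + t *\<^sub>R d) \<bullet> (h *\<^sub>R d))) (at t)"
    using diff_chain_at[OF 1 assms[of "a + t *\<^sub>R d"]] by (simp add: o_def)
  then show ?thesis unfolding has_field_derivative_def
    by (rule has_derivative_eq_rhs) (auto simp: fun_eq_iff)
qed

lemma no_infinite:
  fixes D :: "'a::euclidean_space set"
  assumes cD: "compact D" and cvx: "convex D" and ne: "D \<noteq> {}"
    and der: "\<And>x. (f has_derivative (\<lambda>h. f' x \<bullet> h)) (at x)"
    and cf': "continuous_on UNIV f'"
    and b0: "0 < \<beta>" and b1: "\<beta> < 1" and d0: "0 < \<delta>" and x0D: "x0 \<in> D"
  shows "\<not> stage_infinite D f f' \<beta> \<delta> x0"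
proof
  assume "stage_infinite D f f' \<beta> \<delta> x0"
  then obtain \<tau> x z lam l where adm: "admissible_tau \<tau>" and ini: "stage_init \<tau> x lam l x0"
    and st: "\<And>k. cgmis_step D f f' \<beta> \<delta> \<tau> x z lam l k"
    unfolding stage_infinite_def by blast
  have inv: "0 < lam k" "lam k \<le> \<tau> (l k)" for k using stage_inv[OF adm ini, of k D f f' \<beta> \<delta> z] st by auto
  have xD: "x k \<in> D" for k using stage_inD[OF cvx x0D adm ini, of k f f' \<beta> \<delta> z] st by auto
  have zD: "z k \<in> D" and gk: "\<delta> \<le> f' (x k) \<bullet> (x k - z k)"
     and xs: "x (Suc k) = x k + lam k *\<^sub>R (z k - x k)" for k
    using st[of k] unfolding cgmis_step_def by auto
  have gneg: "f' (x k) \<bullet> (z k - x k) \<le> - \<delta>" for k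
    using gk[of k] by (simp add: inner_diff_right)
  define succ where "succ k \<longleftrightarrow> f (x (Suc k)) \<le> f (x k) + \<beta> * lam k * (f' (x k) \<bullet> (z k - x k))" for k
  have stS: "succ k \<Longrightarrow> l (Suc k) = l k \<and> lam k \<le> lam (Suc k)" for k
    using st[of k] unfolding cgmis_step_def succ_def by (auto split: if_splits)
  have stF: "\<not> succ k \<Longrightarrow> l (Suc k) = Suc (l k)" for k
    using st[of k] unfolding cgmis_step_def succ_def by (auto split: if_splits)
  have contf: "continuous_on D f"
    using der by (meson continuous_at_imp_continuous_on has_derivative_continuous)
  obtain m where m: "\<forall>y\<in>D. f y \<ge> m"
    using continuous_attains_inf[OF cD ne contf] by blast
  show False
  proof (cases "\<exists>K. \<forall>k\<ge>K. succ k")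
    case True
    then obtain K where K: "\<And>k. k \<ge> K \<Longrightarrow> succ k" by blast
    have lamge: "lam K \<le> lam (K + n)" for n
    proof (induction n)
      case (Suc n) then show ?case using stS[OF K[of "K+n"]] by auto
    qed simp
    define c where "c = \<beta> * lam K * \<delta>"
    have c0: "c > 0" unfolding c_def using b0 inv d0 by auto
    have dec: "f (x (K + n)) \<le> f (x K) - real n * c" for n
    proof (induction n)
      case (Suc n)
      have s: "succ (K + n)" by (rule K) simp
      have bl: "0 \<le> \<beta> * lam (K+n)" using b0 inv[of "K+n"] by auto
      have a1: "\<beta> * lam (K+n) * (f' (x (K+n)) \<bullet> (z (K+n) - x (K+n))) \<le> \<beta> * lam (K+n) * (- \<delta>)"
        using mult_left_mono[OF gneg bl] by simp
      have a2: "c \<le> \<beta> * lam (K+n) * \<delta>" unfolding c_def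
        using lamge[of n] b0 d0 by (simp add: mult_right_mono mult_left_mono)
      show ?case using s Suc.IH a1 a2 unfolding succ_def by (auto simp: algebra_simps)
    qed simp
    obtain n where n: "f (x K) - m < real n * c" using reals_Archimedean3[OF c0] by blast
    show False using dec[of n] n m xD[of "K+n"] by fastforce
  next
    case False
    then have fail: "\<And>K. \<exists>k\<ge>K. \<not> succ k" by auto
    have lmono: "l k \<le> l (Suc k)" for k using stS stF by (cases "succ k") auto
    then have inc: "incseq l" by (rule incseq_SucI)
    have unb: "\<exists>K. N \<le> l K" for N
    proof (induction N)
      case (Suc N)
      then obtain K where "N \<le> l K" by blast
      moreover obtain k where "k \<ge> K" "\<not> succ k" using fail by blast
      ultimately have "Suc N \<le> l (Suc k)" using stF incseqD[OF inc] by fastforce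
      then show ?case by blast
    qed simp
    obtain M where M: "\<forall>y\<in>D. norm y \<le> M" using compact_imp_bounded[OF cD] bounded_iff by blast
    define B where "B = 2 * M + 1"
    obtain y0 where "y0 \<in> D" using ne by blast
    then have "M \<ge> 0" using M norm_ge_zero[of y0] by (meson order_trans)
    then have B0: "B > 0" unfolding B_def by simp
    have dB: "norm (z k - x k) \<le> B" for k
    proof -
      have "norm (z k) \<le> M" "norm (x k) \<le> M" using M zD[of k] xD[of k] by auto
      then show ?thesis using norm_triangle_ineq4[of "z k" "x k"] unfolding B_def by linarith
    qed
    define e where "e = (1 - \<beta>) * \<delta> / B"
    have e0: "e > 0" unfolding e_def using b1 d0 B0 by auto
    have "uniformly_continuous_on D f'"
      using compact_uniformly_continuous[OF continuous_on_subset[OF cf'] cD] by auto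
    then obtain \<eta> where eta0: "\<eta> > 0" and eta: "\<And>u v. u \<in> D \<Longrightarrow> v \<in> D \<Longrightarrow> dist u v < \<eta> \<Longrightarrow> dist (f' u) (f' v) < e"
      unfolding uniformly_continuous_on_def using e0 by metis
    have "\<tau> \<longlonglongrightarrow> 0" using adm unfolding admissible_tau_def by auto
    then obtain L where L: "\<And>n. n \<ge> L \<Longrightarrow> dist (\<tau> n) 0 < \<eta> / B"
      unfolding lim_sequentially using eta0 B0 by (meson divide_pos_pos)
    obtain K where "L \<le> l K" using unb by blast
    then obtain k where kK: "k \<ge> K" and nk: "\<not> succ k" and Lk: "L \<le> l k"
      using fail incseqD[OF inc] by (meson order_trans)
    have lamk: "lam k < \<eta> / B" using L[OF Lk] inv[of k] by auto
    define d where "d = z k - x k"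
    define a where "a = x k"
    let ?h = "\<lambda>t. f (a + t *\<^sub>R d)"
    obtain \<theta> where th: "0 < \<theta>" "\<theta> < lam k" and mv: "?h (lam k) - ?h 0 = (lam k - 0) * (f' (a + \<theta> *\<^sub>R d) \<bullet> d)"
      using MVT2[of 0 "lam k" ?h "\<lambda>t. f' (a + t *\<^sub>R d) \<bullet> d"] inv[of k] deriv_line[OF der] by blast
    define \<xi> where "\<xi> = a + \<theta> *\<^sub>R d"
    have "\<tau> (l k) < 1" using adm unfolding admissible_tau_def by auto
    then have th1: "\<theta> < 1" using th inv[of k] by auto
    have "\<xi> = (1 - \<theta>) *\<^sub>R a + \<theta> *\<^sub>R z k" unfolding \<xi>_def d_def a_def by (simp add: algebra_simps)
    then have xiD: "\<xi> \<in> D" using convexD[OF cvx xD[of k] zD[of k], of "1 - \<theta>" \<theta>] th th1 a_def by auto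
    have "dist \<xi> a = \<theta> * norm d" unfolding \<xi>_def dist_norm using th by simp
    also have "\<dots> \<le> \<theta> * B" using dB[of k] th unfolding d_def by (simp add: mult_left_mono)
    also have "\<dots> < lam k * B" using th B0 by simp
    also have "\<dots> < \<eta>" using lamk B0 by (simp add: pos_less_divide_eq)
    finally have "dist (f' \<xi>) (f' a) < e" using eta[OF xiD] xD[of k] unfolding a_def by auto
    then have nf: "norm (f' \<xi> - f' a) < e" by (simp add: dist_norm)
    have "f (x (Suc k)) > f a + \<beta> * lam k * (f' a \<bullet> d)"
      using nk unfolding succ_def a_def d_def by auto
    moreover have "f (x (Suc k)) = ?h (lam k)" unfolding xs a_def d_def ..
    ultimately have "lam k * (f' \<xi> \<bullet> d) > lam k * (\<beta> * (f' a \<bullet> d))"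
      using mv unfolding \<xi>_def by (simp add: algebra_simps)
    then have i1: "f' \<xi> \<bullet> d > \<beta> * (f' a \<bullet> d)" using inv[of k] by simp
    have ga: "f' a \<bullet> d \<le> - \<delta>" using gneg[of k] unfolding a_def d_def .
    have "(f' \<xi> - f' a) \<bullet> d > (1 - \<beta>) * \<delta>"
    proof -
      have "(f' \<xi> - f' a) \<bullet> d = f' \<xi> \<bullet> d - f' a \<bullet> d" by (simp add: inner_diff_left)
      moreover have "(\<beta> - 1) * (f' a \<bullet> d) \<ge> (1 - \<beta>) * \<delta>"
        using mult_left_mono_neg[OF ga, of "\<beta> - 1"] b1 by (simp add: algebra_simps)
      ultimately show ?thesis using i1 by (simp add: algebra_simps)
    qed
    moreover have "(f' \<xi> - f' a) \<bullet> d \<le> norm (f' \<xi> - f' a) * norm d" by (rule norm_cauchy_schwarz)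
    moreover have "norm (f' \<xi> - f' a) * norm d \<le> e * B"
      using nf dB[of k] unfolding d_def by (simp add: mult_mono')
    moreover have "e * B = (1 - \<beta>) * \<delta>" unfolding e_def using B0 by simp
    ultimately show False by linarith
  qed
qed


definition Zsel :: "'a::euclidean_space set \<Rightarrow> ('a \<Rightarrow> 'a) \<Rightarrow> 'a \<Rightarrow> 'a" where
  "Zsel D f' y = (SOME s. s \<in> D \<and> (\<forall>u\<in>D. f' y \<bullet> (y - u) \<le> f' y \<bullet> (y - s)) \<and> mu D f' y = f' y \<bullet> (y - s))"

primrec gseq :: "('a::euclidean_space \<Rightarrow> real) \<Rightarrow> ('a \<Rightarrow> 'a) \<Rightarrow> real \<Rightarrow> (nat \<Rightarrow> real) \<Rightarrow> ('a \<Rightarrow> 'a) \<Rightarrow> 'a \<Rightarrow> nat \<Rightarrow> 'a \<times> real \<times> nat" where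
  "gseq f f' \<beta> \<tau> Z w 0 = (w, \<tau> 0, 0)"
| "gseq f f' \<beta> \<tau> Z w (Suc k) = (case gseq f f' \<beta> \<tau> Z w k of (y, lm, j) \<Rightarrow>
     if f (y + lm *\<^sub>R (Z y - y)) \<le> f y + \<beta> * lm * (f' y \<bullet> (Z y - y))
     then (y + lm *\<^sub>R (Z y - y), lm, j)
     else (y + lm *\<^sub>R (Z y - y), min lm (\<tau> (Suc j)), Suc j))"

lemma stage_exists:
  fixes D :: "'a::euclidean_space set"
  assumes cD: "compact D" and cvx: "convex D" and ne: "D \<noteq> {}"
    and der: "\<And>x. (f has_derivative (\<lambda>h. f' x \<bullet> h)) (at x)"
    and cf': "continuous_on UNIV f'"
    and b0: "0 < \<beta>" and b1: "\<beta> < 1" and d0: "0 < \<delta>" and x0D: "x0 \<in> D"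
  shows "\<exists>w1. stage_output D f f' \<beta> \<delta> x0 w1"
proof -
  define \<tau> where "\<tau> = (\<lambda>n. inverse (real (Suc (Suc n))))"
  have adm: "admissible_tau \<tau>" unfolding admissible_tau_def
  proof
    show "\<forall>n. 0 < \<tau> n \<and> \<tau> n < 1" unfolding \<tau>_def by (auto simp: inverse_less_1_iff)
    show "\<tau> \<longlonglongrightarrow> 0" unfolding \<tau>_def using LIMSEQ_Suc[OF LIMSEQ_inverse_real_of_nat] .
  qed
  have tpos: "0 < \<tau> n" for n using adm unfolding admissible_tau_def by auto
  define Z where "Z = Zsel D f'"
  have Zp: "Z y \<in> D \<and> mu D f' y = f' y \<bullet> (y - Z y)" for y
  proof -
    have "\<exists>s. s \<in> D \<and> (\<forall>u\<in>D. f' y \<bullet> (y - u) \<le> f' y \<bullet> (y - s)) \<and> mu D f' y = f' y \<bullet> (y - s)"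
      using mu_max[OF cD ne, of f' y] by blast
    from someI_ex[OF this] show ?thesis unfolding Z_def Zsel_def by blast
  qed
  define g where "g = gseq f f' \<beta> \<tau> Z x0"
  define x where "x k = fst (g k)" for k
  define lam where "lam k = fst (snd (g k))" for k
  define l where "l k = snd (snd (g k))" for k
  define z where "z k = Z (x k)" for k
  have ini: "stage_init \<tau> x lam l x0" unfolding stage_init_def x_def lam_def l_def g_def using tpos by simp
  have inv: "0 < lam k \<and> lam k \<le> \<tau> (l k)" for k
  proof (induction k)
    case 0 then show ?case unfolding lam_def l_def g_def using tpos by simp
  next
    case (Suc k)
    obtain a b c where abc: "g k = (a, b, c)" by (cases "g k")
    have "0 < b" "b \<le> \<tau> c" using Suc abc unfolding lam_def l_def by auto
    then show ?case using abc tpos[of "Suc c"] unfolding lam_def l_def g_def by (auto simp: min_def)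
  qed
  have step: "cgmis_step D f f' \<beta> \<delta> \<tau> x z lam l k" if "\<delta> \<le> mu D f' (x k)" for k
  proof -
    obtain a b c where abc: "g k = (a, b, c)" by (cases "g k")
    have bc: "0 < b" "b \<le> \<tau> c" using inv[of k] abc unfolding lam_def l_def by auto
    have "x k = a" "lam k = b" "l k = c" "z k = Z a" using abc unfolding x_def lam_def l_def z_def by auto
    then show ?thesis using that Zp[of a] abc bc tpos[of "Suc c"] unfolding cgmis_step_def
      unfolding x_def lam_def l_def z_def g_def by (auto simp: min_def)
  qed
  have "\<exists>K. mu D f' (x K) < \<delta>"
  proof (rule ccontr)
    assume "\<nexists>K. mu D f' (x K) < \<delta>"
    then have "\<forall>k. cgmis_step D f f' \<beta> \<delta> \<tau> x z lam l k" using step by (simp add: not_less)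
    then have "stage_infinite D f f' \<beta> \<delta> x0" unfolding stage_infinite_def using adm ini by blast
    then show False using no_infinite[OF cD cvx ne der cf' b0 b1 d0 x0D] by blast
  qed
  define K where "K = (LEAST K. mu D f' (x K) < \<delta>)"
  have K: "mu D f' (x K) < \<delta>" unfolding K_def using LeastI_ex[OF \<open>\<exists>K. _\<close>] .
  have "\<forall>k<K. cgmis_step D f f' \<beta> \<delta> \<tau> x z lam l k"
    using not_less_Least[where P="\<lambda>K. mu D f' (x K) < \<delta>"] step unfolding K_def by (simp add: not_less)
  then show ?thesis unfolding stage_output_def using adm ini K by blast
qed

lemma output_inD:
  assumes "convex D" "x0 \<in> D" "stage_output D f f' \<beta> \<delta> x0 w1"
  shows "w1 \<in> D"
  using assms(3) stage_inD[OF assms(1,2)] unfolding stage_output_def by blast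


primrec wseq :: "'a::euclidean_space set \<Rightarrow> ('a \<Rightarrow> real) \<Rightarrow> ('a \<Rightarrow> 'a) \<Rightarrow> real \<Rightarrow> (nat \<Rightarrow> real) \<Rightarrow> 'a \<Rightarrow> nat \<Rightarrow> 'a" where
  "wseq D f f' \<beta> \<delta> w0 0 = w0"
| "wseq D f f' \<beta> \<delta> w0 (Suc p) = (SOME w1. stage_output D f f' \<beta> (\<delta> (Suc p)) (wseq D f f' \<beta> \<delta> w0 p) w1)"

lemma run_facts:
  assumes "convex D" "w0 \<in> D" "cgmis_run D f f' \<beta> \<delta> w0 w"
  shows "w p \<in> D" "mu D f' (w (Suc p)) < \<delta> (Suc p)"
proof -
  show "w p \<in> D"
  proof (induction p)
    case 0 then show ?case using assms unfolding cgmis_run_def by auto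
  next
    case (Suc p) then show ?case using output_inD[OF assms(1) Suc] assms(3) unfolding cgmis_run_def by blast
  qed
  show "mu D f' (w (Suc p)) < \<delta> (Suc p)"
  proof -
    have "stage_output D f f' \<beta> (\<delta> (Suc p)) (w p) (w (Suc p))" using assms(3) unfolding cgmis_run_def by blast
    then show ?thesis unfolding stage_output_def by auto
  qed
qed

theorem theorem5p1:
  fixes D :: "'a::euclidean_space set" and f :: "'a \<Rightarrow> real" and f' :: "'a \<Rightarrow> 'a"
    and w0 :: 'a and \<beta> :: real and \<delta> :: "nat \<Rightarrow> real"
  assumes "D \<noteq> {}" and "convex D" and "closed D" and "bounded D"
    and "\<And>x. (f has_derivative (\<lambda>h. f' x \<bullet> h)) (at x)"
    and "continuous_on UNIV f'"
    and "w0 \<in> D" and "0 < \<beta>" and "\<beta> < 1"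
    and "\<And>p. p \<ge> 1 \<Longrightarrow> 0 < \<delta> p" and "\<delta> \<longlonglongrightarrow> 0"
  shows "((\<forall>p\<ge>1. \<forall>x0\<in>D. \<not> stage_infinite D f f' \<beta> (\<delta> p) x0)
          \<and> (\<exists>w. cgmis_run D f f' \<beta> \<delta> w0 w))
         \<and> (\<forall>w. cgmis_run D f f' \<beta> \<delta> w0 w \<longrightarrow>
           (\<exists>a. limit_point_seq w a) \<and> (\<forall>a. limit_point_seq w a \<longrightarrow> a \<in> D0 D f'))
         \<and> (pseudo_convex_on D f f' \<longrightarrow> (\<forall>w. cgmis_run D f f' \<beta> \<delta> w0 w \<longrightarrow>
           (\<forall>a. limit_point_seq w a \<longrightarrow> a \<in> Dstar D f) \<and> (\<lambda>p. f (w p)) \<longlonglongrightarrow> fstar D f))"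
proof -
  note ne = assms(1) and cvx = assms(2) and der = assms(5) and cf' = assms(6) and w0D = assms(7)
    and b0 = assms(8) and b1 = assms(9) and dpos = assms(10) and dlim = assms(11)
  have cD: "compact D" using assms(3,4) compact_eq_bounded_closed by blast
  have P1: "\<forall>p\<ge>1. \<forall>x0\<in>D. \<not> stage_infinite D f f' \<beta> (\<delta> p) x0"
    using no_infinite[OF cD cvx ne der cf' b0 b1 dpos] by blast
  define W where "W = wseq D f f' \<beta> \<delta> w0"
  have Wp: "W p \<in> D \<and> stage_output D f f' \<beta> (\<delta> (Suc p)) (W p) (W (Suc p))" for p
  proof (induction p)
    case 0
    have "\<exists>w1. stage_output D f f' \<beta> (\<delta> (Suc 0)) (W 0) w1"
      using stage_exists[OF cD cvx ne der cf' b0 b1 dpos[of "Suc 0"]] w0D unfolding W_def by simp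
    then have "stage_output D f f' \<beta> (\<delta> (Suc 0)) (W 0) (W (Suc 0))"
      unfolding W_def by simp (rule someI_ex)
    then show ?case using w0D unfolding W_def by simp
  next
    case (Suc p)
    then have D1: "W (Suc p) \<in> D" using output_inD[OF cvx] by blast
    have "\<exists>w1. stage_output D f f' \<beta> (\<delta> (Suc (Suc p))) (W (Suc p)) w1"
      using stage_exists[OF cD cvx ne der cf' b0 b1 dpos[of "Suc (Suc p)"] D1] by simp
    then have "stage_output D f f' \<beta> (\<delta> (Suc (Suc p))) (W (Suc p)) (W (Suc (Suc p)))"
      unfolding W_def by simp (rule someI_ex)
    then show ?case using D1 by simp
  qed
  have P2: "\<exists>w. cgmis_run D f f' \<beta> \<delta> w0 w"
    using Wp unfolding cgmis_run_def by (intro exI[of _ W]) (simp add: W_def)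
  have isf': "isCont f' y" for y using cf' by (simp add: continuous_on_eq_continuous_at)
  have isf: "isCont f y" for y using der has_derivative_continuous by blast
  have sc: "seq_compact D" using cD by (rule compact_imp_seq_compact)
  have lp_D0: "a \<in> D0 D f'" if run: "cgmis_run D f f' \<beta> \<delta> w0 w" and lp: "limit_point_seq w a" for w a
  proof -
    obtain r where r: "strict_mono r" "(w \<circ> r) \<longlonglongrightarrow> a" using lp unfolding limit_point_seq_def by blast
    have wD: "w p \<in> D" for p using run_facts(1)[OF cvx w0D run] .
    have aD: "a \<in> D" using closed_sequentially[OF assms(3) _ r(2)] wD by simp
    have "f' a \<bullet> (y - a) \<ge> 0" if yD: "y \<in> D" for y
    proof -
      have l1: "(\<lambda>n. f' (w (r n)) \<bullet> (w (r n) - y)) \<longlonglongrightarrow> f' a \<bullet> (a - y)"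
        using r(2) by (auto intro!: tendsto_intros isCont_tendsto_compose[OF isf'] simp: o_def)
      have l2: "(\<lambda>n. \<delta> (r n)) \<longlonglongrightarrow> 0" using LIMSEQ_subseq_LIMSEQ[OF dlim r(1)] by (simp add: o_def)
      have ev: "\<forall>\<^sub>F n in sequentially. f' (w (r n)) \<bullet> (w (r n) - y) \<le> \<delta> (r n)"
        unfolding eventually_sequentially
      proof (intro exI[of _ 1] allI impI)
        fix n :: nat assume n1: "1 \<le> n"
        then have "r n \<ge> 1" using seq_suble[OF r(1), of n] by linarith
        then obtain q where q: "r n = Suc q" by (cases "r n") auto
        have "f' (w (r n)) \<bullet> (w (r n) - y) \<le> mu D f' (w (r n))" by (rule mu_ge[OF cD ne yD])
        also have "\<dots> < \<delta> (r n)" using run_facts(2)[OF cvx w0D run, of q] q by simp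
        finally show "f' (w (r n)) \<bullet> (w (r n) - y) \<le> \<delta> (r n)" by simp
      qed
      have "f' a \<bullet> (a - y) \<le> 0" using tendsto_le[OF sequentially_bot l2 l1 ev] .
      then show ?thesis by (simp add: inner_diff_right)
    qed
    then show ?thesis unfolding D0_def using aD by blast
  qed
  have P3: "(\<exists>a. limit_point_seq w a) \<and> (\<forall>a. limit_point_seq w a \<longrightarrow> a \<in> D0 D f')"
    if run: "cgmis_run D f f' \<beta> \<delta> w0 w" for w
  proof -
    have wD: "\<forall>p. w p \<in> D" using run_facts(1)[OF cvx w0D run] by blast
    then obtain a r where "strict_mono r" "(w \<circ> r) \<longlonglongrightarrow> a" using sc unfolding seq_compact_def by blast
    then have "limit_point_seq w a" unfolding limit_point_seq_def by blast
    then show ?thesis using lp_D0[OF run] by blast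
  qed
  have P4: "(\<forall>a. limit_point_seq w a \<longrightarrow> a \<in> Dstar D f) \<and> (\<lambda>p. f (w p)) \<longlonglongrightarrow> fstar D f"
    if pc: "pseudo_convex_on D f f'" and run: "cgmis_run D f f' \<beta> \<delta> w0 w" for w
  proof -
    have wD: "\<forall>p. w p \<in> D" using run_facts(1)[OF cvx w0D run] by blast
    have contf: "continuous_on D f" using isf by (simp add: continuous_at_imp_continuous_on)
    obtain m where m: "\<forall>y\<in>D. m \<le> f y" using continuous_attains_inf[OF cD ne contf] by blast
    have bb: "bdd_below (f ` D)" using m by (auto intro!: bdd_belowI2)
    have lpS: "a \<in> Dstar D f" if lp: "limit_point_seq w a" for a
    proof -
      have a0: "a \<in> D0 D f'" by (rule lp_D0[OF run lp])
      then have aD: "a \<in> D" and ge: "\<forall>y\<in>D. f a \<le> f y" using pc unfolding D0_def pseudo_convex_on_def by auto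
      have "fstar D f = f a" unfolding fstar_def
      proof (rule antisym)
        show "(INF x\<in>D. f x) \<le> f a" using bb aD by (rule cINF_lower)
        show "f a \<le> (INF x\<in>D. f x)" using ne ge by (auto intro!: cINF_greatest)
      qed
      then show ?thesis unfolding Dstar_def using aD by simp
    qed
    have "(\<lambda>p. f (w p)) \<longlonglongrightarrow> fstar D f"
    proof (rule ccontr)
      assume "\<not> ?thesis"
      then obtain e where e0: "e > 0" and ne': "\<not> (\<forall>\<^sub>F p in sequentially. dist (f (w p)) (fstar D f) < e)"
        unfolding tendsto_iff by blast
      define S where "S = {p. dist (f (w p)) (fstar D f) \<ge> e}"
      have infS: "infinite S" unfolding infinite_nat_iff_unbounded_le S_def
        using ne' unfolding eventually_sequentially by (auto simp: not_less)
      define s where "s = enumerate S"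
      have sm: "strict_mono s" unfolding s_def by (rule strict_monoI) (simp add: enumerate_mono infS)
      have sS: "s n \<in> S" for n unfolding s_def by (rule enumerate_in_set[OF infS])
      obtain a r where ar: "a \<in> D" "strict_mono r" "((w \<circ> s) \<circ> r) \<longlonglongrightarrow> a"
        using sc wD unfolding seq_compact_def by (metis comp_apply)
      have "limit_point_seq w a" unfolding limit_point_seq_def
        using ar strict_mono_o[OF sm ar(2)] by (auto simp: o_assoc)
      then have "f a = fstar D f" using lpS unfolding Dstar_def by auto
      moreover have "(\<lambda>n. f (((w \<circ> s) \<circ> r) n)) \<longlonglongrightarrow> f a" by (rule isCont_tendsto_compose[OF isf ar(3)])
      ultimately have "\<forall>\<^sub>F n in sequentially. dist (f (((w \<circ> s) \<circ> r) n)) (fstar D f) < e"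
        using e0 unfolding tendsto_iff by auto
      then obtain n where "dist (f (((w \<circ> s) \<circ> r) n)) (fstar D f) < e" unfolding eventually_sequentially by blast
      moreover have "s (r n) \<in> S" by (rule sS)
      ultimately show False unfolding S_def by auto
    qed
    then show ?thesis using lpS by blast
  qed
  show ?thesis using P1 P2 P3 P4 by blast
qed

end
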